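(* Let $n$ be a positive integer and $m=n+1$. Then for every zero-normalized $\Gamma_{m,n}$-semimodule $\Delta$, the Young diagrams $G_{n+1}(\Delta)$ and $G_n(\Delta)$ coincide (as partitions, i.e. ignoring columns of height zero).
   Context: Let $m,n$ be coprime positive integers and $\Gamma=\{am+bn:a,b\in\mathbb{Z}_{\ge0}\}$. A $\Gamma$-semimodule is $\Delta\subset\mathbb{Z}_{\ge0}$ with $\Delta+\Gamma\subset\Delta$; zero-normalized means $\min\Delta=0$. For $p\in\{m,n\}$, a $p$-generator of $\Delta$ is $a\in\Delta$ with $a-p\notin\Delta$; there are exactly $p$ of them. With $a_1<\dots<a_m$ the $m$-generators and $b_1<\dots<b_n$ the $n$-generators, put $g_m(x)=\#(([x,x+n)\cap\mathbb{Z})\setminus\Delta)$, $g_n(x)=\#(([x,x+m)\cap\mathbb{Z})\setminus\Delta)$. $G_m(\Delta)$ is the Young diagram with column heights $g_m(a_1)\ge\dots\ge g_m(a_m)$, and $G_n(\Delta)$ is the Young diagram with column heights $g_n(b_1)\ge\dots\ge g_n(b_n)$. *)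

theory Defs
  imports Main
begin

definition semigroup_gen :: "nat \<Rightarrow> nat \<Rightarrow> nat set" where
  "semigroup_gen m n = {a * m + b * n | a b. True}"

definition is_semimodule :: "nat \<Rightarrow> nat \<Rightarrow> nat set \<Rightarrow> bool" where
  "is_semimodule m n D \<longleftrightarrow> (\<forall>x\<in>D. \<forall>g\<in>semigroup_gen m n. x + g \<in> D)"

definition zero_normalized :: "nat set \<Rightarrow> bool" where
  "zero_normalized D \<longleftrightarrow> D \<noteq> {} \<and> (LEAST x. x \<in> D) = 0"

definition generators :: "nat set \<Rightarrow> nat \<Rightarrow> nat set" where
  "generators D p = {a \<in> D. int a - int p \<notin> int ` D}"

definition gap_count :: "nat set \<Rightarrow> nat \<Rightarrow> nat \<Rightarrow> nat" where
  "gap_count D L x = card ({x..<x+L} - D)"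

text \<open>Young diagram with column heights gap_count D L a over the p-generators a,
  represented as the weakly decreasing list of its column heights.\<close>
definition young_diagram :: "nat set \<Rightarrow> nat \<Rightarrow> nat \<Rightarrow> nat list" where
  "young_diagram D p L = rev (sort (map (gap_count D L) (sorted_list_of_set (generators D p))))"

definition G_m :: "nat \<Rightarrow> nat \<Rightarrow> nat set \<Rightarrow> nat list" where
  "G_m m n D = young_diagram D m n"

definition G_n :: "nat \<Rightarrow> nat \<Rightarrow> nat set \<Rightarrow> nat list" where
  "G_n m n D = young_diagram D n m"

definition partition_of :: "nat list \<Rightarrow> nat list" where
  "partition_of hs = filter (\<lambda>h. 0 < h) hs"

end

theory Submission
  imports Defs "HOL-Library.Multiset"
begin

lemma gen_char: "generators D p = {a\<in>D. \<not>(p \<le> a \<and> a - p \<in> D)}"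
proof -
  have "int a - int p \<in> int ` D \<longleftrightarrow> (p \<le> a \<and> a - p \<in> D)" for a
  proof
    assume "int a - int p \<in> int ` D"
    then obtain d where "d \<in> D" "int a - int p = int d" by auto
    then show "p \<le> a \<and> a - p \<in> D" by (metis add_diff_cancel_right' diff_add_cancel le_add2 nat_int of_nat_add)
  next
    assume "p \<le> a \<and> a - p \<in> D"
    then show "int a - int p \<in> int ` D" by (metis image_eqI of_nat_diff)
  qed
  then show ?thesis unfolding generators_def by auto
qed

lemma count_split:
  assumes cl: "\<forall>x\<in>D. x + p \<in> D"
  shows "card {x\<in>D. x<T} = card {a\<in>generators D p. a<T} + card {x\<in>D. x+p<T}"
proof -
  have eq: "{x\<in>D. x<T} = {a\<in>generators D p. a<T} \<union> (\<lambda>x. x+p) ` {x\<in>D. x+p<T}"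
    unfolding gen_char using cl by (auto simp: image_iff) (metis le_add_diff_inverse2)
  have disj: "{a\<in>generators D p. a<T} \<inter> (\<lambda>x. x+p) ` {x\<in>D. x+p<T} = {}"
    unfolding gen_char by auto
  have f1: "finite {a\<in>generators D p. a<T}" by (rule finite_subset[of _ "{..<T}"]) auto
  have f2: "finite {x\<in>D. x+p<T}" by (rule finite_subset[of _ "{..<T}"]) auto
  show ?thesis unfolding eq
    by (subst card_Un_disjoint[OF f1 _ disj]) (use f2 in \<open>auto simp: card_image inj_on_def\<close>)
qed

lemma count_img: "finite S \<Longrightarrow> count (image_mset f (mset_set S)) v = card {x\<in>S. f x = v}"
proof -
  assume fS: "finite S"
  have "count (image_mset f (mset_set S)) v = (\<Sum>x | x \<in># mset_set S \<and> v = f x. count (mset_set S) x)"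
    by (rule count_image_mset')
  also have "\<dots> = (\<Sum>x \<in> {x\<in>S. f x = v}. 1)"
    by (rule sum.cong) (use fS in auto)
  finally show ?thesis by simp
qed

lemma part_eq:
  assumes "mset (filter (\<lambda>h. 0 < h) xs) = mset (filter (\<lambda>h. 0 < h) ys)"
  shows "partition_of (rev (sort xs)) = partition_of (rev (sort ys))"
proof -
  have "sort (filter (\<lambda>h. 0 < h) xs) = sort (filter (\<lambda>h. 0 < h) ys)"
    by (rule properties_for_sort) (use assms in auto)
  then have "filter (\<lambda>h. 0 < h) (sort xs) = filter (\<lambda>h. 0 < h) (sort ys)" by (simp add: filter_sort)
  then show ?thesis unfolding partition_of_def by (simp add: rev_filter[symmetric])
qed

context
  fixes n :: nat and D :: "nat set"
  assumes npos: "0 < n" and cln: "\<forall>x\<in>D. x + n \<in> D" and clm: "\<forall>x\<in>D. x + (n+1) \<in> D"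
    and cof: "\<And>z. z \<notin> D \<Longrightarrow> z < n*n"
begin

definition h where "h x = card ({x..<x+n} - D)"

lemma h_pos: "0 < h x \<Longrightarrow> x < n*n"
proof -
  assume "0 < h x"
  then have "{x..<x+n} - D \<noteq> {}" unfolding h_def by (metis card.empty less_irrefl)
  then obtain z where "z \<in> {x..<x+n} - D" by (meson ex_in_conv)
  then have "z \<ge> x" "z \<notin> D" by auto
  then show ?thesis using cof[of z] by simp
qed

lemma h_Suc: "h (Suc y) \<le> h y"
proof -
  let ?g = "\<lambda>z. if z = y + n then y else z"
  have "inj_on ?g ({Suc y..<Suc y+n} - D)" unfolding inj_on_def by auto
  moreover have "?g ` ({Suc y..<Suc y+n} - D) \<subseteq> {y..<y+n} - D"
    using cln npos by auto
  ultimately show ?thesis unfolding h_def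
    by (metis card_inj_on_le finite_Diff finite_atLeastLessThan)
qed

lemma h_anti: "y \<le> x \<Longrightarrow> h x \<le> h y"
  using lift_Suc_antimono_le[of h, OF h_Suc] by blast

lemma h_mem: "y \<in> D \<Longrightarrow> h y \<le> h (Suc y)"
proof -
  assume "y \<in> D"
  then have "{y..<y+n} - D \<subseteq> {Suc y..<Suc y+n} - D"
    by (auto simp: Suc_le_eq) (metis le_neq_implies_less)
  then show ?thesis unfolding h_def by (intro card_mono) auto
qed

abbreviation "A \<equiv> generators D (n+1)"
abbreviation "B \<equiv> generators D n"

lemma key: "T = 0 \<or> T - 1 \<notin> D \<Longrightarrow> card {a\<in>A. a<T} = card {b\<in>B. b<T}"
proof -
  assume T: "T = 0 \<or> T - 1 \<notin> D"
  have e: "{x\<in>D. x+n<T} = {x\<in>D. x+(n+1)<T}"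
  proof (cases "T = 0")
    case True then show ?thesis by simp
  next
    case False
    then have "T - 1 \<notin> D" using T by simp
    then have "x \<in> D \<Longrightarrow> x + n \<noteq> T - 1" for x using cln by auto
    then show ?thesis using False by fastforce
  qed
  show ?thesis using count_split[OF cln, of T] count_split[OF clm, of T] e by simp
qed

lemma level:
  assumes k: "1 \<le> k"
  shows "card {a\<in>A. k \<le> h a} = card {b\<in>B. k \<le> h b}"
proof (cases "{x. k \<le> h x} = {}")
  case True then show ?thesis by simp
next
  case False
  let ?U = "{x. k \<le> h x}"
  have fin: "finite ?U" by (rule finite_subset[of _ "{..<n*n}"]) (use h_pos k in auto)
  define T where "T = Suc (Max ?U)"
  have MU: "Max ?U \<in> ?U" using Max_in[OF fin False] .
  have U: "k \<le> h x \<longleftrightarrow> x < T" for x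
  proof
    assume "k \<le> h x" then show "x < T" unfolding T_def using Max_ge[OF fin] by fastforce
  next
    assume "x < T"
    then have "x \<le> Max ?U" unfolding T_def by simp
    then show "k \<le> h x" using MU h_anti by (meson le_trans mem_Collect_eq)
  qed
  have "\<not> k \<le> h T" using U by simp
  then have "T - 1 \<notin> D" using MU h_mem[of "Max ?U"] unfolding T_def by auto
  then have "card {a\<in>A. a<T} = card {b\<in>B. b<T}" using key by blast
  then show ?thesis using U by simp
qed

lemma levelv:
  assumes v: "1 \<le> v"
  shows "card {a\<in>A. h a = v} = card {b\<in>B. h b = v}"
proof -
  have "{x\<in>S. h x = v} = {x\<in>S. v \<le> h x} - {x\<in>S. Suc v \<le> h x}" for S by auto
  moreover have "finite {x\<in>S. v \<le> h x}" for S
    by (rule finite_subset[of _ "{..<n*n}"]) (use h_pos v in auto)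
  moreover have "{x\<in>S. Suc v \<le> h x} \<subseteq> {x\<in>S. v \<le> h x}" for S by auto
  ultimately have "card {x\<in>S. h x = v} = card {x\<in>S. v \<le> h x} - card {x\<in>S. Suc v \<le> h x}" for S
  proof -
    assume e: "\<And>S. {x\<in>S. h x = v} = {x\<in>S. v \<le> h x} - {x\<in>S. Suc v \<le> h x}"
      and f: "\<And>S. finite {x\<in>S. v \<le> h x}"
      and s: "\<And>S. {x\<in>S. Suc v \<le> h x} \<subseteq> {x\<in>S. v \<le> h x}"
    have "finite {x\<in>S. Suc v \<le> h x}" by (rule finite_subset[OF s f])
    then show ?thesis unfolding e[of S] by (rule card_Diff_subset[OF _ s])
  qed
  then show ?thesis using level[of v] level[of "Suc v"] v by simp
qed


lemma finA: "finite (generators D p)" if "0 < p" "\<forall>x\<in>D. x + p \<in> D"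
proof (rule finite_subset[of _ "{..<n*n+p}"])
  show "generators D p \<subseteq> {..<n*n+p}"
  proof
    fix a assume "a \<in> generators D p"
    then have "\<not>(p \<le> a \<and> a - p \<in> D)" unfolding gen_char by auto
    then show "a \<in> {..<n*n+p}" using cof[of "a - p"] by (cases "p \<le> a") auto
  qed
qed simp

lemma final: "partition_of (young_diagram D (n+1) n) = partition_of (young_diagram D n (n+1))"
proof -
  have fA: "finite A" using finA[of "n+1"] clm by simp
  have fB: "finite B" using finA[of n] cln npos by simp
  have g1: "gap_count D n = h" by (rule ext) (simp add: gap_count_def h_def)
  have g2: "map (gap_count D (n+1)) (sorted_list_of_set B) = map h (sorted_list_of_set B)"
  proof (rule map_cong[OF refl])
    fix b assume "b \<in> set (sorted_list_of_set B)"
    then have "b \<in> D" using fB unfolding generators_def by auto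
    then have "b + n \<in> D" using cln by auto
    then have "{b..<b+(n+1)} - D = {b..<b+n} - D" by (auto simp: less_Suc_eq)
    then show "gap_count D (n+1) b = h b" by (simp add: gap_count_def h_def)
  qed
  have m: "mset (filter (\<lambda>v. 0 < v) (map h (sorted_list_of_set S))) = filter_mset (\<lambda>v. 0 < v) (image_mset h (mset_set S))" if "finite S" for S
  proof -
    have "mset_set S = mset (sorted_list_of_set S)"
      by (metis mset_sorted_list_of_multiset sorted_list_of_mset_set)
    then show ?thesis by (simp add: mset_filter)
  qed
  have "filter_mset (\<lambda>v. 0 < v) (image_mset h (mset_set A)) = filter_mset (\<lambda>v. 0 < v) (image_mset h (mset_set B))"
  proof (rule multiset_eqI)
    fix v
    show "count (filter_mset (\<lambda>v. 0 < v) (image_mset h (mset_set A))) v = count (filter_mset (\<lambda>v. 0 < v) (image_mset h (mset_set B))) v"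
      using levelv[of v] count_img[OF fA, of h v] count_img[OF fB, of h v] by (simp del: One_nat_def add: Suc_le_eq)
  qed
  then show ?thesis unfolding young_diagram_def g1 g2
    by (intro part_eq) (simp only: m[OF fA] m[OF fB])
qed

end

theorem mainTheorem6:
  fixes n :: nat and D :: "nat set"
  assumes "0 < n"
    and "is_semimodule (n + 1) n D"
    and "zero_normalized D"
  shows "partition_of (G_m (n + 1) n D) = partition_of (G_n (n + 1) n D)"
proof -
  have z: "0 \<in> D" using assms(3) unfolding zero_normalized_def by (metis LeastI ex_in_conv)
  have sg: "a * (n+1) + b * n \<in> semigroup_gen (n+1) n" for a b unfolding semigroup_gen_def by blast
  have cl: "x \<in> D \<Longrightarrow> x + (a * (n+1) + b * n) \<in> D" for x a b
    using assms(2) sg unfolding is_semimodule_def by blast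
  have cln: "\<forall>x\<in>D. x + n \<in> D" using cl[of _ 0 1] by simp
  have clm: "\<forall>x\<in>D. x + (n+1) \<in> D" using cl[of _ 1 0] by simp
  have cof: "z < n*n" if "z \<notin> D" for z
  proof (rule ccontr)
    assume "\<not> z < n*n"
    then have "n*n \<le> z" by simp
    define q r where "q = z div n" and "r = z mod n"
    have zq: "z = q*n + r" unfolding q_def r_def by simp
    have rn: "r < n" unfolding r_def using assms(1) by simp
    have "n \<le> q" unfolding q_def using \<open>n*n \<le> z\<close> assms(1)
      by (metis div_le_mono nonzero_mult_div_cancel_right not_gr_zero)
    then have "z = r * (n+1) + (q - r) * n" using zq rn
      by (simp add: algebra_simps diff_mult_distrib)
    then have "z \<in> D" using cl[OF z, of r "q - r"] by simp
    then show False using that by simp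
  qed
  show ?thesis unfolding G_m_def G_n_def using final[OF assms(1) cln clm cof] by simp
qed

end
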